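(* For each $\kappa>0$ let $\mathcal G_\kappa=\{g_{H,\kappa}:H\in\mathcal P((0,\infty))\}$, where $$g_{H,\kappa}(\theta)=\int\frac{\lambda^\kappa}{\Gamma(\kappa)}\theta^{\kappa-1}e^{-\lambda\theta}\,dH(\lambda),\qquad\theta>0.$$ Then for any $0<\kappa<\kappa'$, $\mathcal G_\kappa\subseteq\mathcal G_{\kappa'}$.
   Context: $\mathcal P((0,\infty))$ denotes the set of probability measures on $(0,\infty)$. *)

theory Defs
  imports "HOL-Probability.Probability"
begin

text \<open>Probability measures on (0,infinity), represented as Borel probability
measures on the reals giving zero mass to (-infinity,0].\<close>
definition prob_pos :: "real measure set" where
  "prob_pos = {H. prob_space H \<and> sets H = sets borel \<and> emeasure H {..0} = 0}"

definition gmix :: "real measure \<Rightarrow> real \<Rightarrow> real \<Rightarrow> real" where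
  "gmix H \<kappa> \<theta> =
     (\<integral>l. l powr \<kappa> / Gamma \<kappa> * \<theta> powr (\<kappa> - 1) * exp (- l * \<theta>) \<partial>H)"

definition Gclass :: "real \<Rightarrow> (real \<Rightarrow> real) set" where
  "Gclass \<kappa> = {(\<lambda>\<theta>. if \<theta> > 0 then gmix H \<kappa> \<theta> else 0) | H. H \<in> prob_pos}"

end

theory Submission
  imports Defs
begin

lemma gamma_scaled:
  fixes s c :: real
  assumes s: "s > 0" and c: "c > 0"
  shows "(\<integral>\<^sup>+t. ennreal (indicator {0<..} t * t powr (s-1) * exp (-c*t)) \<partial>lborel)
         = ennreal (Gamma s * c powr (-s))"
proof -
  define I where "I = (\<integral>\<^sup>+t. ennreal (indicator {0<..} t * t powr (s-1) * exp (-c*t)) \<partial>lborel)"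
  have "ennreal (Gamma s) = (\<integral>\<^sup>+t. ennreal (indicator {0..} t * t powr (s - 1) / exp t) \<partial>lborel)"
    using Gamma_conv_nn_integral_real[OF s] .
  also have "\<dots> = ennreal \<bar>c\<bar> * (\<integral>\<^sup>+x. ennreal (indicator {0..} (0 + c*x) * (0 + c*x) powr (s - 1) / exp (0 + c*x)) \<partial>lborel)"
    by (rule nn_integral_real_affine) (use c in auto)
  also have "(\<integral>\<^sup>+x. ennreal (indicator {0..} (0 + c*x) * (0 + c*x) powr (s - 1) / exp (0 + c*x)) \<partial>lborel)
      = (\<integral>\<^sup>+x. ennreal (c powr (s-1)) * ennreal (indicator {0<..} x * x powr (s-1) * exp (-c*x)) \<partial>lborel)"
  proof (rule nn_integral_cong)
    fix x :: real
    show "ennreal (indicator {0..} (0 + c*x) * (0 + c*x) powr (s - 1) / exp (0 + c*x))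
      = ennreal (c powr (s-1)) * ennreal (indicator {0<..} x * x powr (s-1) * exp (-c*x))"
    proof (cases "x > 0")
      case True
      then show ?thesis using c
        by (simp add: ennreal_mult'[symmetric] powr_mult exp_minus field_simps indicator_def)
    next
      case False
      then have "x < 0 \<or> x = 0" by auto
      then show ?thesis using c
        by (auto simp: indicator_def zero_le_mult_iff)
    qed
  qed
  also have "\<dots> = ennreal (c powr (s-1)) * I"
    unfolding I_def by (rule nn_integral_cmult) simp
  finally have eq: "ennreal (Gamma s) = ennreal (c powr s) * I"
    using c by (simp add: ennreal_mult'[symmetric] mult.assoc[symmetric] powr_diff field_simps
       flip: ennreal_mult)
  have "ennreal (Gamma s * c powr (-s)) = ennreal (c powr (-s)) * ennreal (Gamma s)"
    using c Gamma_real_pos[OF s] by (simp add: ennreal_mult[symmetric] mult.commute)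
  also have "\<dots> = ennreal (c powr (-s) * c powr s) * I"
    using c by (simp add: eq ennreal_mult mult.assoc)
  also have "c powr (-s) * c powr s = 1" using c by (simp add: powr_minus)
  finally show ?thesis unfolding I_def by simp
qed

lemma beta_prime:
  fixes a b :: real
  assumes a: "a > 0" and b: "b > 0"
  shows "(\<integral>\<^sup>+t. ennreal (indicator {0<..} t * t powr (b-1) * (1+t) powr (-(a+b))) \<partial>lborel)
         = ennreal (Gamma a * Gamma b / Gamma (a+b))"
proof -
  define F :: "real \<Rightarrow> real \<Rightarrow> ennreal" where "F = (\<lambda>t s. ennreal (indicator {0<..} t * indicator {0<..} s * t powr (b-1) * s powr (a+b-1) * exp (-s) * exp (-(t * s))))"
  have Fm: "case_prod F \<in> borel_measurable (lborel \<Otimes>\<^sub>M lborel)"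
    unfolding F_def by measurable
  have ab: "a + b > 0" using a b by simp
  have Gab: "Gamma (a+b) > 0" using Gamma_real_pos[OF ab] .
  have step1: "ennreal (Gamma (a+b)) * ennreal (indicator {0<..} t * t powr (b-1) * (1+t) powr (-(a+b)))
      = (\<integral>\<^sup>+s. F t s \<partial>lborel)" for t :: real
  proof (cases "t > 0")
    case True
    have "(\<integral>\<^sup>+s. F t s \<partial>lborel) = (\<integral>\<^sup>+s. ennreal (t powr (b-1)) * ennreal (indicator {0<..} s * s powr ((a+b)-1) * exp (-(1+t) * s)) \<partial>lborel)"
      unfolding F_def using True
      by (intro nn_integral_cong) (simp add: ennreal_mult[symmetric] indicator_def exp_add[symmetric] algebra_simps)
    also have "\<dots> = ennreal (t powr (b-1)) * ennreal (Gamma (a+b) * (1+t) powr (-(a+b)))"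
      by (subst nn_integral_cmult) (use True ab gamma_scaled[of "a+b" "1+t"] in auto)
    finally show ?thesis using True Gab
      by (simp add: ennreal_mult[symmetric] mult_ac)
  next
    case False
    then show ?thesis unfolding F_def by (simp add: indicator_def)
  qed
  have step2: "(\<integral>\<^sup>+t. F t s \<partial>lborel) = ennreal (Gamma b) * ennreal (indicator {0<..} s * s powr (a-1) * exp (-1 * s))" for s :: real
  proof (cases "s > 0")
    case True
    have "(\<integral>\<^sup>+t. F t s \<partial>lborel) = (\<integral>\<^sup>+t. ennreal (s powr (a+b-1) * exp (-s)) * ennreal (indicator {0<..} t * t powr (b-1) * exp (-s*t)) \<partial>lborel)"
      unfolding F_def using True
      by (intro nn_integral_cong) (simp add: ennreal_mult[symmetric] indicator_def algebra_simps)
    also have "\<dots> = ennreal (s powr (a+b-1) * exp (-s)) * ennreal (Gamma b * s powr (-b))"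
      by (subst nn_integral_cmult) (use True b gamma_scaled[of b s] in auto)
    also have "\<dots> = ennreal (Gamma b) * ennreal (s powr (a-1) * exp (-s))"
      using True Gamma_real_pos[OF b]
      by (simp add: ennreal_mult[symmetric] mult_ac powr_add[symmetric])
    finally show ?thesis using True by (simp add: indicator_def)
  next
    case False
    then show ?thesis unfolding F_def by (simp add: indicator_def)
  qed
  have "ennreal (Gamma (a+b)) * (\<integral>\<^sup>+t. ennreal (indicator {0<..} t * t powr (b-1) * (1+t) powr (-(a+b))) \<partial>lborel)
      = (\<integral>\<^sup>+t. ennreal (Gamma (a+b)) * ennreal (indicator {0<..} t * t powr (b-1) * (1+t) powr (-(a+b))) \<partial>lborel)"
    by (subst nn_integral_cmult) auto
  also have "\<dots> = (\<integral>\<^sup>+t. \<integral>\<^sup>+s. F t s \<partial>lborel \<partial>lborel)"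
    using step1 by simp
  also have "\<dots> = (\<integral>\<^sup>+s. \<integral>\<^sup>+t. F t s \<partial>lborel \<partial>lborel)"
    using lborel_pair.Fubini'[OF Fm] by simp
  also have "\<dots> = (\<integral>\<^sup>+s. ennreal (Gamma b) * ennreal (indicator {0<..} s * s powr (a-1) * exp (-1 * s)) \<partial>lborel)"
    using step2 by simp
  also have "\<dots> = ennreal (Gamma b) * ennreal (Gamma a * 1 powr (-a))"
    by (subst nn_integral_cmult) (use a gamma_scaled[of a 1] in auto)
  finally have eq: "ennreal (Gamma (a+b)) * (\<integral>\<^sup>+t. ennreal (indicator {0<..} t * t powr (b-1) * (1+t) powr (-(a+b))) \<partial>lborel)
      = ennreal (Gamma a * Gamma b)"
    using Gamma_real_pos[OF b] Gamma_real_pos[OF a] by (simp add: ennreal_mult[symmetric] mult_ac)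
  have "ennreal (Gamma a * Gamma b / Gamma (a+b)) = ennreal (1 / Gamma (a+b)) * ennreal (Gamma a * Gamma b)"
    using Gab Gamma_real_pos[OF b] Gamma_real_pos[OF a] by (simp add: ennreal_mult[symmetric])
  also have "\<dots> = ennreal (1 / Gamma (a+b) * Gamma (a+b)) * (\<integral>\<^sup>+t. ennreal (indicator {0<..} t * t powr (b-1) * (1+t) powr (-(a+b))) \<partial>lborel)"
  proof -
    have "ennreal (1 / Gamma (a+b)) * ennreal (Gamma (a+b)) = ennreal (1 / Gamma (a+b) * Gamma (a+b))"
      using Gab by (simp add: ennreal_mult[symmetric])
    then show ?thesis by (simp only: eq[symmetric] mult.assoc[symmetric])
  qed
  finally show ?thesis using Gab by simp
qed

lemma core:
  fixes k k' l th :: real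
  assumes k: "0 < k" and kk: "k < k'" and l: "l > 0" and th: "th > 0"
  defines "C \<equiv> Gamma k' / (Gamma k * Gamma (k' - k))"
  shows "(\<integral>\<^sup>+t. ennreal (C * (indicator {0<..} t * t powr (k'-k-1) * (1+t) powr (-k'))) *
            ennreal ((l*(1+t)) powr k' / Gamma k' * th powr (k' - 1) * exp (- (l*(1+t)) * th)) \<partial>lborel)
         = ennreal (l powr k / Gamma k * th powr (k - 1) * exp (- l * th))"
proof -
  define d where "d = k' - k"
  have d: "d > 0" using kk by (simp add: d_def)
  have k'pos: "k' > 0" using k kk by simp
  have G: "Gamma k > 0" "Gamma k' > 0" "Gamma d > 0"
    using Gamma_real_pos k k'pos d by auto
  have C: "C \<ge> 0" unfolding C_def using G by (simp add: d_def)
  define A where "A = C * l powr k' * th powr (k'-1) * exp (-l*th) / Gamma k'"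
  have A: "A \<ge> 0" unfolding A_def using C G by simp
  have pt: "ennreal (C * (indicator {0<..} t * t powr (k'-k-1) * (1+t) powr (-k'))) *
            ennreal ((l*(1+t)) powr k' / Gamma k' * th powr (k' - 1) * exp (- (l*(1+t)) * th))
        = ennreal A * ennreal (indicator {0<..} t * t powr (d-1) * exp (-(l*th)*t))" for t :: real
  proof (cases "t > 0")
    case True
    have e1: "(l*(1+t)) powr k' * (1+t) powr (-k') = l powr k'"
      using True l by (simp add: powr_mult powr_minus)
    have e2: "exp (- (l*(1+t)) * th) = exp (-l*th) * exp (-(l*th)*t)"
      by (simp add: exp_add[symmetric] algebra_simps)
    have "C * (indicator {0<..} t * t powr (k'-k-1) * (1+t) powr (-k')) *
            ((l*(1+t)) powr k' / Gamma k' * th powr (k' - 1) * exp (- (l*(1+t)) * th))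
        = C * t powr (d-1) * ((l*(1+t)) powr k' * (1+t) powr (-k')) / Gamma k' * th powr (k' - 1) * exp (- (l*(1+t)) * th)"
      using True by (simp add: d_def)
    also have "\<dots> = A * (indicator {0<..} t * t powr (d-1) * exp (-(l*th)*t))"
      unfolding e1 e2 A_def using True by simp
    finally show ?thesis using A C G True l th
      by (simp add: ennreal_mult[symmetric])
  next
    case False
    then show ?thesis by (simp add: indicator_def)
  qed
  have eqA: "A * (Gamma d * (l*th) powr (-d)) = l powr k / Gamma k * th powr (k - 1) * exp (- l * th)"
  proof -
    have p1: "l powr k' * l powr (-d) = l powr k" by (simp add: powr_add[symmetric] d_def)
    have p2: "th powr (k'-1) * th powr (-d) = th powr (k-1)" by (simp add: powr_add[symmetric] d_def)
    have "A * (Gamma d * (l*th) powr (-d)) = C * Gamma d / Gamma k' * (l powr k' * l powr (-d)) * (th powr (k'-1) * th powr (-d)) * exp (-l*th)"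
      unfolding A_def using l th by (simp add: powr_mult)
    also have "\<dots> = l powr k / Gamma k * th powr (k - 1) * exp (- l * th)"
      unfolding p1 p2 C_def d_def[symmetric] using G by simp
    finally show ?thesis .
  qed
  have "(\<integral>\<^sup>+t. ennreal (C * (indicator {0<..} t * t powr (k'-k-1) * (1+t) powr (-k'))) *
            ennreal ((l*(1+t)) powr k' / Gamma k' * th powr (k' - 1) * exp (- (l*(1+t)) * th)) \<partial>lborel)
      = (\<integral>\<^sup>+t. ennreal A * ennreal (indicator {0<..} t * t powr (d-1) * exp (-(l*th)*t)) \<partial>lborel)"
    using pt by simp
  also have "\<dots> = ennreal A * ennreal (Gamma d * (l*th) powr (-d))"
    by (subst nn_integral_cmult) (use gamma_scaled[of d "l*th"] d l th in auto)
  also have "\<dots> = ennreal (l powr k / Gamma k * th powr (k - 1) * exp (- l * th))"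
    using eqA A G d l th by (simp add: ennreal_mult[symmetric])
  finally show ?thesis .
qed

theorem lemma5p1:
  fixes \<kappa> \<kappa>' :: real
  assumes "0 < \<kappa>" and "\<kappa> < \<kappa>'"
  shows "Gclass \<kappa> \<subseteq> Gclass \<kappa>'"
proof
  fix g assume "g \<in> Gclass \<kappa>"
  then obtain H where H: "H \<in> prob_pos" and g: "g = (\<lambda>\<theta>. if \<theta> > 0 then gmix H \<kappa> \<theta> else 0)"
    unfolding Gclass_def by blast
  have Hp: "prob_space H" and Hs: "sets H = sets borel" and H0: "emeasure H {..0} = 0"
    using H unfolding prob_pos_def by auto
  interpret H: prob_space H by (rule Hp)
  have [measurable_cong]: "sets H = sets borel" by (rule Hs)
  define k where "k = \<kappa>"
  define k' where "k' = \<kappa>'"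
  have k: "0 < k" and kk: "k < k'" using assms by (auto simp: k_def k'_def)
  have k'pos: "k' > 0" using k kk by simp
  have G: "Gamma k > 0" "Gamma k' > 0" "Gamma (k'-k) > 0"
    using Gamma_real_pos k k'pos kk by auto
  define C where "C = Gamma k' / (Gamma k * Gamma (k' - k))"
  have C: "C \<ge> 0" unfolding C_def using G by simp
  define f where "f = (\<lambda>t::real. ennreal (C * (indicator {0<..} t * t powr (k'-k-1) * (1+t) powr (-k'))))"
  have fm[measurable]: "f \<in> borel_measurable borel" unfolding f_def by measurable
  define P where "P = density lborel f"
  have "emeasure P (space P) = (\<integral>\<^sup>+t. f t \<partial>lborel)"
    unfolding P_def by (simp add: emeasure_density)
  also have "\<dots> = ennreal C * (\<integral>\<^sup>+t. ennreal (indicator {0<..} t * t powr ((k'-k)-1) * (1+t) powr (-(k+(k'-k)))) \<partial>lborel)"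
    unfolding f_def using C by (subst nn_integral_cmult[symmetric]) (auto simp: ennreal_mult[symmetric] intro!: nn_integral_cong)
  also have "\<dots> = ennreal C * ennreal (Gamma k * Gamma (k'-k) / Gamma (k + (k'-k)))"
    using beta_prime[of k "k'-k"] k kk by simp
  also have "\<dots> = 1" using C G unfolding C_def by (simp add: ennreal_mult[symmetric])
  finally have Pp: "prob_space P" by (intro prob_spaceI)
  interpret P: prob_space P by (rule Pp)
  interpret HP: pair_prob_space H P ..
  have [measurable_cong]: "sets P = sets borel" unfolding P_def by simp
  define T where "T = (\<lambda>(l::real, t::real). l * (1+t))"
  have Tm[measurable]: "T \<in> borel_measurable (H \<Otimes>\<^sub>M P)" unfolding T_def by measurable
  define H' where "H' = distr (H \<Otimes>\<^sub>M P) borel T"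
  have AEH: "AE l in H. l > 0"
    by (rule AE_I'[of "{..0}"]) (use H0 Hs in \<open>auto simp: null_sets_def\<close>)
  have int: "(\<integral>\<^sup>+m. u m \<partial>H') = (\<integral>\<^sup>+l. \<integral>\<^sup>+t. f t * u (l*(1+t)) \<partial>lborel \<partial>H)"
    if um[measurable]: "u \<in> borel_measurable borel" for u :: "real \<Rightarrow> ennreal"
  proof -
    have "(\<integral>\<^sup>+m. u m \<partial>H') = (\<integral>\<^sup>+x. u (T x) \<partial>(H \<Otimes>\<^sub>M P))"
      unfolding H'_def by (subst nn_integral_distr) auto
    also have "\<dots> = (\<integral>\<^sup>+l. \<integral>\<^sup>+t. u (T (l,t)) \<partial>P \<partial>H)"
      by (subst P.nn_integral_fst[symmetric]) auto
    also have "\<dots> = (\<integral>\<^sup>+l. \<integral>\<^sup>+t. f t * u (l*(1+t)) \<partial>lborel \<partial>H)"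
      unfolding P_def T_def by (subst nn_integral_density) auto
    finally show ?thesis .
  qed
  have H'p: "H' \<in> prob_pos"
    unfolding prob_pos_def
  proof (intro CollectI conjI)
    show "prob_space H'" unfolding H'_def by (rule HP.prob_space_distr) simp
    show "sets H' = sets borel" unfolding H'_def by simp
    have "emeasure H' {..0} = (\<integral>\<^sup>+m. indicator {..0} m \<partial>H')"
      unfolding H'_def by simp
    also have "\<dots> = (\<integral>\<^sup>+l. \<integral>\<^sup>+t. f t * indicator {..0} (l*(1+t)) \<partial>lborel \<partial>H)"
      by (rule int) simp
    also have "\<dots> = (\<integral>\<^sup>+l. 0 \<partial>H)"
    proof (rule nn_integral_cong_AE)
      show "AE l in H. (\<integral>\<^sup>+t. f t * indicator {..0} (l*(1+t)) \<partial>lborel) = 0"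
        using AEH
      proof eventually_elim
        case (elim l)
        have z: "f t * indicator {..0} (l*(1+t)) = 0" for t
        proof (cases "t > 0")
          case True
          then have "l*(1+t) > 0" using elim by simp
          then show ?thesis by (simp add: indicator_def)
        qed (auto simp: f_def indicator_def)
        show ?case unfolding z by simp
      qed
    qed
    finally show "emeasure H' {..0} = 0" by simp
  qed
  show "g \<in> Gclass \<kappa>'"
    unfolding Gclass_def
  proof (intro CollectI exI conjI)
    show "H' \<in> prob_pos" by (rule H'p)
    show "g = (\<lambda>\<theta>. if \<theta> > 0 then gmix H' \<kappa>' \<theta> else 0)"
    proof
      fix th :: real
      show "g th = (if th > 0 then gmix H' \<kappa>' th else 0)"
      proof (cases "th > 0")
        case False then show ?thesis by (simp add: g)
      next
        case th: True
        have "gmix H \<kappa> th = enn2real (\<integral>\<^sup>+l. ennreal (l powr k / Gamma k * th powr (k - 1) * exp (- l * th)) \<partial>H)"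
          unfolding gmix_def k_def using G(1) unfolding k_def
          by (subst integral_eq_nn_integral) auto
        also have "(\<integral>\<^sup>+l. ennreal (l powr k / Gamma k * th powr (k - 1) * exp (- l * th)) \<partial>H)
            = (\<integral>\<^sup>+l. \<integral>\<^sup>+t. f t * ennreal ((l*(1+t)) powr k' / Gamma k' * th powr (k' - 1) * exp (- (l*(1+t)) * th)) \<partial>lborel \<partial>H)"
        proof (rule nn_integral_cong_AE)
          show "AE l in H. ennreal (l powr k / Gamma k * th powr (k - 1) * exp (- l * th))
             = (\<integral>\<^sup>+t. f t * ennreal ((l*(1+t)) powr k' / Gamma k' * th powr (k' - 1) * exp (- (l*(1+t)) * th)) \<partial>lborel)"
            using AEH
          proof eventually_elim
            case (elim l)
            show ?case unfolding f_def C_def using core[OF k kk elim th] by simp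
          qed
        qed
        also have "\<dots> = (\<integral>\<^sup>+m. ennreal (m powr k' / Gamma k' * th powr (k' - 1) * exp (- m * th)) \<partial>H')"
          by (subst int) auto
        also have "enn2real \<dots> = gmix H' \<kappa>' th"
          unfolding gmix_def k'_def using G(2) unfolding k'_def
          by (subst integral_eq_nn_integral) (auto simp: H'_def)
        finally show ?thesis using th by (simp add: g)
      qed
    qed
  qed
qed

end
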